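(* The mechanism \textsc{Greedy Min-Sum} is strategyproof: for every instance $(N,P,T,(\mathbf{D}_i)_{i\in N})$, every agent $i\in N$ and every disapproval vector $\mathbf{D}'_i$, we have $d_i(\mathcal{M}(\mathcal{D}_{-i},\mathbf{D}_i))\le d_i(\mathcal{M}(\mathcal{D}_{-i},\mathbf{D}'_i))$, where $\mathcal{M}$ is \textsc{Greedy Min-Sum} and $d_i$ is computed with respect to the true disapproval vector $\mathbf{D}_i$.
   Context: An instance is $(N,P,T,(\mathbf{D}_i)_{i\in N})$ with agents $N=[n]$, projects $P=\{p_1,\dots,p_m\}$, timesteps $T=[\ell]$, and disapproval vectors $\mathbf{D}_i=(D_{i1},\dots,D_{i\ell})$ with $D_{ik}\subseteq P$. An outcome is $\mathbf{o}=(o_1,\dots,o_\ell)\in P^\ell$ and $d_i(\mathbf{o})=|\{k\in T:o_k\in D_{ik}\}|$. A mechanism maps each instance to an outcome. $\mathcal{D}_{-i}$ denotes the list of disapproval vectors of all agents other than $i$. \textsc{Greedy Min-Sum} selects, at each timestep $k$, a project with the smallest number of agents disapproving it at timestep $k$ (i.e., minimizing $|\{j\in N:p\in D_{jk}\}|$), breaking ties lexicographically according to the fixed order $p_1,\dots,p_m$. *)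

theory Defs
  imports Main
begin

(* Agents: 0..<n.  Projects p_1..p_m are encoded as 0..<m (lexicographic order =
   numeric order).  Timesteps: 0..<l.
   A profile D :: nat => nat => nat set maps agent j and timestep k to D_{jk}. *)

type_synonym profile = "nat \<Rightarrow> nat \<Rightarrow> nat set"

definition disapproval_count :: "nat \<Rightarrow> profile \<Rightarrow> nat \<Rightarrow> nat \<Rightarrow> nat" where
  "disapproval_count n D k p = card {j \<in> {0..<n}. p \<in> D j k}"

definition greedy_choice :: "nat \<Rightarrow> nat \<Rightarrow> profile \<Rightarrow> nat \<Rightarrow> nat" where
  "greedy_choice n m D k =
     (LEAST p. p < m \<and> (\<forall>q<m. disapproval_count n D k p \<le> disapproval_count n D k q))"

definition greedy_min_sum :: "nat \<Rightarrow> nat \<Rightarrow> nat \<Rightarrow> profile \<Rightarrow> nat list" where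
  "greedy_min_sum n m l D = map (greedy_choice n m D) [0..<l]"

definition disutility :: "(nat \<Rightarrow> nat set) \<Rightarrow> nat list \<Rightarrow> nat" where
  "disutility Di out = card {k. k < length out \<and> out ! k \<in> Di k}"

end

theory Submission
  imports Defs
begin

lemma card_split_i:
  fixes i n :: nat
  assumes "i < n"
  shows "card {j\<in>{0..<n}. P j} = card {j\<in>{0..<n}. j \<noteq> i \<and> P j} + (if P i then 1 else 0)"
proof (cases "P i")
  case True
  have "{j\<in>{0..<n}. P j} = insert i {j\<in>{0..<n}. j \<noteq> i \<and> P j}" using assms True by auto
  then show ?thesis using True by simp
next
  case False
  have "{j\<in>{0..<n}. P j} = {j\<in>{0..<n}. j \<noteq> i \<and> P j}" using False by auto
  then show ?thesis using False by simp
qed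

lemma count_upd:
  assumes "i < n"
  shows "disapproval_count n (D(i := Di')) k p + (if p \<in> D i k then 1 else 0)
       = disapproval_count n D k p + (if p \<in> Di' k then 1 else 0)"
proof -
  have a: "disapproval_count n (D(i := Di')) k p = card {j\<in>{0..<n}. j \<noteq> i \<and> p \<in> D j k} + (if p \<in> Di' k then 1 else 0)"
    unfolding disapproval_count_def
    by (subst card_split_i[OF assms]) (simp cong: conj_cong)
  have b: "disapproval_count n D k p = card {j\<in>{0..<n}. j \<noteq> i \<and> p \<in> D j k} + (if p \<in> D i k then 1 else 0)"
    unfolding disapproval_count_def by (rule card_split_i[OF assms])
  show ?thesis using a b by simp
qed

lemma greedy_props:
  assumes "m \<ge> 1"
  shows "greedy_choice n m D k < m \<and>
         (\<forall>q<m. disapproval_count n D k (greedy_choice n m D k) \<le> disapproval_count n D k q) \<and>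
         (\<forall>p. p < m \<and> (\<forall>q<m. disapproval_count n D k p \<le> disapproval_count n D k q) \<longrightarrow> greedy_choice n m D k \<le> p)"
proof -
  let ?P = "\<lambda>p. p < m \<and> (\<forall>q<m. disapproval_count n D k p \<le> disapproval_count n D k q)"
  obtain x where "x < m \<and> (\<forall>y. y < m \<longrightarrow> disapproval_count n D k x \<le> disapproval_count n D k y)"
    using ex_has_least_nat[of "\<lambda>p. p < m" 0 "disapproval_count n D k"] assms by auto
  then have "?P x" by blast
  then have "?P (greedy_choice n m D k)" unfolding greedy_choice_def by (rule LeastI)
  moreover have "\<forall>p. ?P p \<longrightarrow> greedy_choice n m D k \<le> p"
    unfolding greedy_choice_def by (auto intro: Least_le)
  ultimately show ?thesis by blast
qed

lemma step:
  assumes "m \<ge> 1" "i < n" "greedy_choice n m D k \<in> D i k"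
  shows "greedy_choice n m (D(i := Di')) k \<in> D i k"
proof (rule ccontr)
  let ?g = "greedy_choice n m D k" and ?h = "greedy_choice n m (D(i := Di')) k"
  let ?c = "disapproval_count n D k" and ?d = "disapproval_count n (D(i := Di')) k"
  assume nh: "?h \<notin> D i k"
  note G = greedy_props[OF assms(1), of n D k] and H = greedy_props[OF assms(1), of n "D(i := Di')" k]
  have e1: "?d ?g + 1 = ?c ?g + (if ?g \<in> Di' k then 1 else 0)"
    using count_upd[OF assms(2), of D Di' k ?g] assms(3) by simp
  have e2: "?d ?h = ?c ?h + (if ?h \<in> Di' k then 1 else 0)"
    using count_upd[OF assms(2), of D Di' k ?h] nh by simp
  have "?c ?g \<le> ?c ?h" using G H by blast
  moreover have "?d ?h \<le> ?d ?g" using G H by blast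
  ultimately have eq1: "?c ?g = ?c ?h" and eq2: "?d ?h = ?d ?g" using e1 e2 by (auto split: if_splits)
  have "?g \<le> ?h" using G H eq1 by metis
  moreover have "?h \<le> ?g" using G H eq2 by metis
  ultimately have "?g = ?h" by simp
  then show False using nh assms(3) by simp
qed

theorem theorem9:
  fixes n m l :: nat and D :: profile and i :: nat and Di' :: "nat \<Rightarrow> nat set"
  assumes "m \<ge> 1"
    and "\<And>j k. j < n \<Longrightarrow> k < l \<Longrightarrow> D j k \<subseteq> {0..<m}"
    and "\<And>k. k < l \<Longrightarrow> Di' k \<subseteq> {0..<m}"
    and "i < n"
  shows "disutility (D i) (greedy_min_sum n m l D)
           \<le> disutility (D i) (greedy_min_sum n m l (D(i := Di')))"
  unfolding disutility_def greedy_min_sum_def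
proof (rule card_mono)
  show "finite {k. k < length (map (greedy_choice n m (D(i := Di'))) [0..<l]) \<and>
        map (greedy_choice n m (D(i := Di'))) [0..<l] ! k \<in> D i k}" by simp
  show "{k. k < length (map (greedy_choice n m D) [0..<l]) \<and> map (greedy_choice n m D) [0..<l] ! k \<in> D i k}
    \<subseteq> {k. k < length (map (greedy_choice n m (D(i := Di'))) [0..<l]) \<and>
        map (greedy_choice n m (D(i := Di'))) [0..<l] ! k \<in> D i k}"
    using step[OF assms(1) assms(4)] by auto
qed

end
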